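(* Let $(\mathcal H,\mathfrak A_0)$ be a Hilbert quasi *-algebra admitting a norm-continuous module function $\mu$ with $\mu(\mathfrak A_0)\subseteq\mathfrak A_0^+$. Then every w-positive element is the limit of a sequence of elements of $\mathfrak A_0^+$; i.e. $\mathcal H^+=\mathcal H^+_w$.
   Context: A Hilbert algebra is a *-algebra $\mathfrak A_0$ with an inner product $\langle\cdot,\cdot\rangle$ such that (i) for each $x$, $y\mapsto xy$ is continuous for the inner product norm; (ii) $\langle xy,z\rangle=\langle y,x^*z\rangle$ for all $x,y,z$; (iii) $\langle x,y\rangle=\langle y^*,x^*\rangle$ for all $x,y$; (iv) the linear span of $\{xy:x,y\in\mathfrak A_0\}$ is dense in $\mathfrak A_0$. Let $\mathcal H$ be the Hilbert space completion of $\mathfrak A_0$; the involution extends isometrically to $\mathcal H$, and the products $\xi x$, $x\xi$ for $\xi\in\mathcal H$, $x\in\mathfrak A_0$ are defined by continuity. It is assumed that (A): if $\xi\in\mathcal H$ and $\xi x=0$ for all $x\in\mathfrak A_0$ then $\xi=0$. With these operations $(\mathcal H,\mathfrak A_0)$ is called a Hilbert quasi *-algebra. $\mathfrak A_0^+=\{\sum_{k=1}^n x_k^*x_k: x_k\in\mathfrak A_0,n\in\mathbb N\}$, $\mathcal H^+$ is its norm closure in $\mathcal H$, and $\mathcal H^+_w=\{\xi\in\mathcal H:\langle\xi x,x\rangle\ge0\ \forall x\in\mathfrak A_0\}$ (w-positive elements). A module function is a map $\mu:\mathcal H\to\mathcal H$ with (i) $\mu(\xi)\in\mathcal H^+_w$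 for all $\xi$; (ii) $\mu(\xi)=\xi$ for all $\xi\in\mathcal H^+_w$; (iii) $\|\mu(\xi)\|=\|\xi\|$ for all $\xi$. *)

theory Defs
  imports Complex_Main "HOL-Library.Complex_Order"
begin

text \<open>
  A Hilbert quasi *-algebra (H, A0) is represented by:
  the carrier type 'h (= the Hilbert space H), a complex scalar multiplication sc,
  a complex inner product ip (linear in the first, conjugate-linear in the second argument),
  the dense *-subalgebra A0 (a subset of 'h), a multiplication mult and an involution invol.
  mult is the algebra product on A0 x A0; for x in A0 the maps (xi |-> mult xi x) and
  (xi |-> mult x xi) are the continuous extensions to H; invol is the isometric extension of
  the involution to H.
\<close>

definition hnorm :: "('h \<Rightarrow> 'h \<Rightarrow> complex) \<Rightarrow> 'h \<Rightarrow> real" where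
  "hnorm ip x = sqrt (Re (ip x x))"

locale hilbert_quasi_star_algebra =
  fixes A0 :: "'h::ab_group_add set"
    and sc :: "complex \<Rightarrow> 'h \<Rightarrow> 'h"
    and ip :: "'h \<Rightarrow> 'h \<Rightarrow> complex"
    and mult :: "'h \<Rightarrow> 'h \<Rightarrow> 'h"
    and invol :: "'h \<Rightarrow> 'h"
  assumes
    sc_add_right: "\<And>a x y. sc a (x + y) = sc a x + sc a y"
  and sc_add_left: "\<And>a b x. sc (a + b) x = sc a x + sc b x"
  and sc_sc: "\<And>a b x. sc a (sc b x) = sc (a * b) x"
  and sc_one: "\<And>x. sc 1 x = x"
  and ip_add_left: "\<And>x y z. ip (x + y) z = ip x z + ip y z"
  and ip_sc_left: "\<And>a x y. ip (sc a x) y = a * ip x y"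
  and ip_conj: "\<And>x y. ip y x = cnj (ip x y)"
  and ip_pos: "\<And>x. 0 \<le> ip x x"
  and ip_definite: "\<And>x. ip x x = 0 \<Longrightarrow> x = 0"
  and complete: "\<And>X. (\<forall>e>0. \<exists>N. \<forall>m\<ge>N. \<forall>n\<ge>N. hnorm ip (X m - X n) < e) \<Longrightarrow>
                     \<exists>l. (\<lambda>n. hnorm ip (X n - l)) \<longlonglongrightarrow> 0"
  and A0_zero: "0 \<in> A0"
  and A0_add: "\<And>x y. x \<in> A0 \<Longrightarrow> y \<in> A0 \<Longrightarrow> x + y \<in> A0"
  and A0_sc: "\<And>a x. x \<in> A0 \<Longrightarrow> sc a x \<in> A0"
  and A0_dense: "\<And>\<xi> e. e > 0 \<Longrightarrow> \<exists>x\<in>A0. hnorm ip (\<xi> - x) < e"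
  and mult_closed: "\<And>x y. x \<in> A0 \<Longrightarrow> y \<in> A0 \<Longrightarrow> mult x y \<in> A0"
  and mult_assoc: "\<And>x y z. x \<in> A0 \<Longrightarrow> y \<in> A0 \<Longrightarrow> z \<in> A0 \<Longrightarrow>
                      mult (mult x y) z = mult x (mult y z)"
  and mult_sc_left: "\<And>a x y. x \<in> A0 \<Longrightarrow> y \<in> A0 \<Longrightarrow> mult (sc a x) y = sc a (mult x y)"
  and mult_sc_right: "\<And>a x y. x \<in> A0 \<Longrightarrow> y \<in> A0 \<Longrightarrow> mult x (sc a y) = sc a (mult x y)"
  and inv_closed: "\<And>x. x \<in> A0 \<Longrightarrow> invol x \<in> A0"
  and inv_sc: "\<And>a x. x \<in> A0 \<Longrightarrow> invol (sc a x) = sc (cnj a) (invol x)"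
  and inv_inv: "\<And>x. x \<in> A0 \<Longrightarrow> invol (invol x) = x"
  and inv_mult: "\<And>x y. x \<in> A0 \<Longrightarrow> y \<in> A0 \<Longrightarrow> invol (mult x y) = mult (invol y) (invol x)"
  and left_mult_bounded: "\<And>x. x \<in> A0 \<Longrightarrow> \<exists>C. \<forall>y\<in>A0. hnorm ip (mult x y) \<le> C * hnorm ip y"
  and ip_mult: "\<And>x y z. x \<in> A0 \<Longrightarrow> y \<in> A0 \<Longrightarrow> z \<in> A0 \<Longrightarrow>
                   ip (mult x y) z = ip y (mult (invol x) z)"
  and ip_inv: "\<And>x y. x \<in> A0 \<Longrightarrow> y \<in> A0 \<Longrightarrow> ip x y = ip (invol y) (invol x)"
  and products_dense: "\<And>z e. z \<in> A0 \<Longrightarrow> e > 0 \<Longrightarrow>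
       \<exists>(n::nat) xs ys. (\<forall>k<n. xs k \<in> A0 \<and> ys k \<in> A0) \<and>
                 hnorm ip (z - (\<Sum>k<n. mult (xs k) (ys k))) < e"
  and inv_add: "\<And>\<xi> \<eta>. invol (\<xi> + \<eta>) = invol \<xi> + invol \<eta>"
  and inv_isometric: "\<And>\<xi>. hnorm ip (invol \<xi>) = hnorm ip \<xi>"
  and mult_add_left: "\<And>\<xi> \<eta> x. x \<in> A0 \<Longrightarrow> mult (\<xi> + \<eta>) x = mult \<xi> x + mult \<eta> x"
  and mult_add_right: "\<And>\<xi> \<eta> x. x \<in> A0 \<Longrightarrow> mult x (\<xi> + \<eta>) = mult x \<xi> + mult x \<eta>"
  and right_mult_ext_bounded: "\<And>x. x \<in> A0 \<Longrightarrow> \<exists>C. \<forall>\<xi>. hnorm ip (mult \<xi> x) \<le> C * hnorm ip \<xi>"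
  and left_mult_ext_bounded: "\<And>x. x \<in> A0 \<Longrightarrow> \<exists>C. \<forall>\<xi>. hnorm ip (mult x \<xi>) \<le> C * hnorm ip \<xi>"
  and condA: "\<And>\<xi>. (\<forall>x\<in>A0. mult \<xi> x = 0) \<Longrightarrow> \<xi> = 0"

definition A0_plus :: "'h::ab_group_add set \<Rightarrow> ('h \<Rightarrow> 'h \<Rightarrow> 'h) \<Rightarrow> ('h \<Rightarrow> 'h) \<Rightarrow> 'h set" where
  "A0_plus A0 mult invol =
     {\<Sum>k<n. mult (invol (xs k)) (xs k) | (n::nat) xs. n \<ge> 1 \<and> (\<forall>k<n. xs k \<in> A0)}"

definition H_plus :: "'h::ab_group_add set \<Rightarrow> ('h \<Rightarrow> 'h \<Rightarrow> complex) \<Rightarrow> ('h \<Rightarrow> 'h \<Rightarrow> 'h) \<Rightarrow> ('h \<Rightarrow> 'h) \<Rightarrow> 'h set" where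
  "H_plus A0 ip mult invol =
     {\<xi>. \<exists>X. (\<forall>n. X n \<in> A0_plus A0 mult invol) \<and> (\<lambda>n. hnorm ip (X n - \<xi>)) \<longlonglongrightarrow> 0}"

definition H_plus_w :: "'h set \<Rightarrow> ('h \<Rightarrow> 'h \<Rightarrow> complex) \<Rightarrow> ('h \<Rightarrow> 'h \<Rightarrow> 'h) \<Rightarrow> 'h set" where
  "H_plus_w A0 ip mult = {\<xi>. \<forall>x\<in>A0. 0 \<le> ip (mult \<xi> x) x}"

definition module_function :: "'h::ab_group_add set \<Rightarrow> ('h \<Rightarrow> 'h \<Rightarrow> complex) \<Rightarrow> ('h \<Rightarrow> 'h \<Rightarrow> 'h) \<Rightarrow> ('h \<Rightarrow> 'h) \<Rightarrow> bool" where
  "module_function A0 ip mult \<mu> \<longleftrightarrow>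
     (\<forall>\<xi>. \<mu> \<xi> \<in> H_plus_w A0 ip mult) \<and>
     (\<forall>\<xi>\<in>H_plus_w A0 ip mult. \<mu> \<xi> = \<xi>) \<and>
     (\<forall>\<xi>. hnorm ip (\<mu> \<xi>) = hnorm ip \<xi>)"

definition norm_continuous :: "('h::ab_group_add \<Rightarrow> 'h \<Rightarrow> complex) \<Rightarrow> ('h \<Rightarrow> 'h) \<Rightarrow> bool" where
  "norm_continuous ip f \<longleftrightarrow>
     (\<forall>\<xi>. \<forall>e>0. \<exists>d>0. \<forall>\<eta>. hnorm ip (\<eta> - \<xi>) < d \<longrightarrow> hnorm ip (f \<eta> - f \<xi>) < e)"

end

theory Submission
  imports Defs
begin

context hilbert_quasi_star_algebra
begin

lemma ip_zero_left: "ip 0 y = 0"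
  using ip_add_left[of 0 0 y] by simp

lemma ip_minus_left: "ip (- x) y = - ip x y"
  using ip_add_left[of x "-x" y] by (simp add: ip_zero_left eq_neg_iff_add_eq_0 add.commute)

lemma ip_diff_left: "ip (x - z) y = ip x y - ip z y"
  using ip_add_left[of x "-z" y] ip_minus_left[of z y] by simp

lemma ip_add_right: "ip x (y + z) = ip x y + ip x z"
  by (metis ip_conj ip_add_left complex_cnj_add)

lemma ip_sc_right: "ip x (sc a y) = cnj a * ip x y"
  by (metis ip_conj ip_sc_left complex_cnj_mult)

lemma ip_minus_right: "ip x (- y) = - ip x y"
  by (metis ip_conj ip_minus_left complex_cnj_minus)

lemma ipxx: "ip x x = complex_of_real ((hnorm ip x)^2)"
proof -
  have "0 \<le> ip x x" by (rule ip_pos)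
  then have "Im (ip x x) = 0" "0 \<le> Re (ip x x)" by (auto simp: less_eq_complex_def)
  then show ?thesis by (simp add: hnorm_def complex_eq_iff)
qed

lemma hnorm_nonneg: "0 \<le> hnorm ip x"
  using ip_pos[of x] by (simp add: hnorm_def less_eq_complex_def)

lemma hnorm_minus: "hnorm ip (- x) = hnorm ip x"
  by (simp add: hnorm_def ip_minus_left ip_minus_right)

lemma hnorm_commute: "hnorm ip (a - b) = hnorm ip (b - a)"
  using hnorm_minus[of "a - b"] by simp

lemma cs_bound: "(cmod (ip d x))^2 \<le> (hnorm ip d)^2 * ((hnorm ip x)^2 + 1)"
proof -
  define c where "c = ip d x"
  define N where "N = (hnorm ip x)^2"
  define D where "D = (hnorm ip d)^2"
  define t where "t = 1 / (N + 1)"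
  define s where "s = - (complex_of_real t * c)"
  have N0: "0 \<le> N" unfolding N_def by simp
  have D0: "0 \<le> D" unfolding D_def by simp
  have t0: "0 < t" unfolding t_def using N0 by simp
  have "ip (d + sc s x) (d + sc s x) = ip d d + cnj s * ip d x + s * (ip x d + cnj s * ip x x)"
    by (simp add: ip_add_left ip_add_right ip_sc_left ip_sc_right algebra_simps)
  also have "\<dots> = of_real D + cnj s * c + s * (cnj c + cnj s * of_real N)"
    unfolding c_def N_def D_def by (simp add: ipxx ip_conj[of d x])
  also have "\<dots> = of_real (D - 2 * t * (cmod c)^2 + t^2 * (cmod c)^2 * N)"
  proof -
    have cc: "c * cnj c = of_real ((cmod c)^2)"
      by (simp add: complex_norm_square[symmetric])
    have "of_real D + cnj s * c + s * (cnj c + cnj s * of_real N) =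
       of_real D - 2 * of_real t * (c * cnj c) + (of_real t)^2 * (c * cnj c) * of_real N"
      unfolding s_def by (simp add: algebra_simps power2_eq_square)
    also have "\<dots> = of_real (D - 2 * t * (cmod c)^2 + t^2 * (cmod c)^2 * N)"
      unfolding cc by simp
    finally show ?thesis .
  qed
  finally have eq: "ip (d + sc s x) (d + sc s x) = of_real (D - 2 * t * (cmod c)^2 + t^2 * (cmod c)^2 * N)" .
  have "0 \<le> Re (ip (d + sc s x) (d + sc s x))"
    using ip_pos[of "d + sc s x"] by (simp add: less_eq_complex_def)
  then have ineq: "0 \<le> D - 2 * t * (cmod c)^2 + t^2 * (cmod c)^2 * N" using eq by simp
  define M where "M = (cmod c)^2"
  have M0: "0 \<le> M" unfolding M_def by simp
  have "0 \<le> D * (N+1)^2 - 2 * (N+1) * M + M * N"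
  proof -
    have tN: "t * (N+1) = 1" unfolding t_def using N0 by simp
    have "0 \<le> (D - 2 * t * M + t^2 * M * N) * (N+1)^2"
      using ineq M_def N0 by simp
    also have "\<dots> = D*(N+1)^2 - 2*M*(N+1)*(t*(N+1)) + M*N*(t*(N+1))^2"
      by (simp add: algebra_simps power2_eq_square)
    also have "\<dots> = D*(N+1)^2 - 2*M*(N+1) + M*N" using tN by simp
    finally show ?thesis by (simp add: algebra_simps)
  qed
  then have "M * (N + 2) \<le> D * (N+1)^2" by (simp add: algebra_simps)
  then have "M * (N + 1) \<le> D * (N+1) * (N+1)" using M0 N0
    by (smt (verit, best) mult_left_mono power2_eq_square mult.assoc)
  then have "M \<le> D * (N+1)" using N0
    by (smt (verit) mult_right_le_imp_le)
  then show ?thesis unfolding M_def D_def N_def c_def .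
qed

lemma cs_bound2: "cmod (ip d x) \<le> hnorm ip d * sqrt ((hnorm ip x)^2 + 1)"
proof -
  have "cmod (ip d x) = sqrt ((cmod (ip d x))^2)" by simp
  also have "\<dots> \<le> sqrt ((hnorm ip d)^2 * ((hnorm ip x)^2 + 1))"
    using cs_bound real_sqrt_le_mono by blast
  also have "\<dots> = hnorm ip d * sqrt ((hnorm ip x)^2 + 1)"
    by (simp add: real_sqrt_mult hnorm_nonneg)
  finally show ?thesis .
qed

lemma mult_zero_left: "x \<in> A0 \<Longrightarrow> mult 0 x = 0"
  using mult_add_left[of x 0 0] by simp

lemma mult_diff_left: "x \<in> A0 \<Longrightarrow> mult (a - b) x = mult a x - mult b x"
  using mult_add_left[of x "a - b" b] by (simp add: eq_diff_eq)

lemma mult_sum_left: "x \<in> A0 \<Longrightarrow> mult (\<Sum>k<(n::nat). f k) x = (\<Sum>k<n. mult (f k) x)"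
  by (induction n) (simp_all add: mult_zero_left mult_add_left)

lemma ip_sum_left: "ip (\<Sum>k<(n::nat). f k) x = (\<Sum>k<n. ip (f k) x)"
  by (induction n) (simp_all add: ip_zero_left ip_add_left)

lemma A0_plus_pos:
  assumes "p \<in> A0_plus A0 mult invol" "x \<in> A0"
  shows "0 \<le> ip (mult p x) x"
proof -
  obtain n ys where p: "p = (\<Sum>k<(n::nat). mult (invol (ys k)) (ys k))" and ys: "\<forall>k<n. ys k \<in> A0"
    using assms(1) unfolding A0_plus_def mem_Collect_eq by force
  have "ip (mult p x) x = (\<Sum>k<n. ip (mult (mult (invol (ys k)) (ys k)) x) x)"
    unfolding p by (simp add: mult_sum_left[OF assms(2)] ip_sum_left)
  also have "\<dots> \<ge> 0"
  proof (rule sum_nonneg)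
    fix k assume "k \<in> {..<n}"
    then have y: "ys k \<in> A0" using ys by simp
    have "ip (mult (mult (invol (ys k)) (ys k)) x) x = ip (mult (invol (ys k)) (mult (ys k) x)) x"
      using y assms(2) by (simp add: mult_assoc inv_closed)
    also have "\<dots> = ip (mult (ys k) x) (mult (ys k) x)"
      using y assms(2) by (simp add: ip_mult inv_closed mult_closed inv_inv)
    finally show "0 \<le> ip (mult (mult (invol (ys k)) (ys k)) x) x" by (simp add: ip_pos)
  qed
  finally show ?thesis .
qed

end

lemma (in hilbert_quasi_star_algebra) Hplus_sub:
  assumes "\<xi> \<in> H_plus A0 ip mult invol"
  shows "\<xi> \<in> H_plus_w A0 ip mult"
  unfolding H_plus_w_def mem_Collect_eq
proof
  fix x assume x: "x \<in> A0"
  obtain X where X: "\<And>n. X n \<in> A0_plus A0 mult invol" and lim: "(\<lambda>n. hnorm ip (X n - \<xi>)) \<longlonglongrightarrow> 0"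
    using assms unfolding H_plus_def by blast
  obtain C where C: "\<And>\<eta>. hnorm ip (mult \<eta> x) \<le> C * hnorm ip \<eta>"
    using right_mult_ext_bounded[OF x] by blast
  define K where "K = sqrt ((hnorm ip x)^2 + 1)"
  have K0: "0 \<le> K" unfolding K_def by simp
  define w where "w n = ip (mult (X n) x) x" for n
  define z where "z = ip (mult \<xi> x) x"
  have bound: "norm (w n - z) \<le> K * (C * hnorm ip (X n - \<xi>))" for n
  proof -
    have "w n - z = ip (mult (X n - \<xi>) x) x"
      unfolding w_def z_def by (simp add: mult_diff_left[OF x] ip_diff_left)
    then have "norm (w n - z) \<le> hnorm ip (mult (X n - \<xi>) x) * K"
      using cs_bound2 K_def by simp
    also have "\<dots> \<le> C * hnorm ip (X n - \<xi>) * K"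
      using mult_right_mono[OF C K0] .
    finally show ?thesis by (simp add: algebra_simps)
  qed
  have gl: "(\<lambda>n. K * (C * hnorm ip (X n - \<xi>))) \<longlonglongrightarrow> 0"
    using tendsto_mult_right_zero[OF tendsto_mult_right_zero[OF lim]] by simp
  have ev: "eventually (\<lambda>n. norm (w n - z) \<le> norm (K * (C * hnorm ip (X n - \<xi>))) * 1) sequentially"
  proof (rule always_eventually, rule allI)
    fix n
    have "K * (C * hnorm ip (X n - \<xi>)) \<le> norm (K * (C * hnorm ip (X n - \<xi>)))"
      by (simp only: real_norm_def abs_ge_self)
    then show "norm (w n - z) \<le> norm (K * (C * hnorm ip (X n - \<xi>))) * 1"
      using bound[of n] by linarith
  qed
  have "(\<lambda>n. w n - z) \<longlonglongrightarrow> 0"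
    using tendsto_0_le[OF gl ev] .
  then have wz: "w \<longlonglongrightarrow> z" by (simp add: LIM_zero_iff)
  have wpos: "0 \<le> w n" for n unfolding w_def using A0_plus_pos[OF X x] .
  have rp: "\<exists>N. \<forall>n\<ge>N. 0 \<le> Re (w n)"
    using wpos by (simp add: less_eq_complex_def)
  have "Re z \<ge> 0"
    using LIMSEQ_le_const[OF tendsto_Re[OF wz] rp] .
  moreover have "Im z = 0"
  proof -
    have "(\<lambda>n. Im (w n)) \<longlonglongrightarrow> Im z" using tendsto_Im[OF wz] .
    moreover have "(\<lambda>n. Im (w n)) = (\<lambda>n. 0)" using wpos by (simp add: less_eq_complex_def)
    ultimately have "(\<lambda>n. (0::real)) \<longlonglongrightarrow> Im z" by simp
    then show ?thesis using LIMSEQ_unique[OF _ tendsto_const] by metis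
  qed
  ultimately show "0 \<le> ip (mult \<xi> x) x" unfolding z_def by (simp add: less_eq_complex_def)
qed

lemma (in hilbert_quasi_star_algebra) Hw_sub:
  assumes mf: "module_function A0 ip mult \<mu>" and nc: "norm_continuous ip \<mu>"
    and img: "\<mu> ` A0 \<subseteq> A0_plus A0 mult invol"
    and xi: "\<xi> \<in> H_plus_w A0 ip mult"
  shows "\<xi> \<in> H_plus A0 ip mult invol"
proof -
  have fix\<xi>: "\<mu> \<xi> = \<xi>" using mf xi unfolding module_function_def by blast
  have "\<forall>n. \<exists>x\<in>A0. hnorm ip (\<xi> - x) < 1 / (real n + 1)"
    using A0_dense by simp
  then have "\<exists>X. \<forall>n. X n \<in> A0 \<and> hnorm ip (\<xi> - X n) < 1 / (real n + 1)"
    by (intro choice) blast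
  then obtain X where X: "\<And>n. X n \<in> A0" and Xc: "\<And>n. hnorm ip (\<xi> - X n) < 1 / (real n + 1)"
    by blast
  have "(\<lambda>n. hnorm ip (\<mu> (X n) - \<xi>)) \<longlonglongrightarrow> 0"
  proof (rule LIMSEQ_I)
    fix r :: real assume r: "0 < r"
    obtain d where d: "d > 0" "\<And>\<eta>. hnorm ip (\<eta> - \<xi>) < d \<Longrightarrow> hnorm ip (\<mu> \<eta> - \<mu> \<xi>) < r"
      using nc r unfolding norm_continuous_def by blast
    obtain N :: nat where N0: "N > 0" and N1: "inverse (real N) < d"
      using ex_inverse_of_nat_less[OF d(1)] by blast
    have "1 / (real N + 1) \<le> inverse (real N)" using N0 by (simp add: inverse_eq_divide frac_le)
    then have N: "1 / (real N + 1) < d" using N1 by linarith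
    show "\<exists>no. \<forall>n\<ge>no. norm (hnorm ip (\<mu> (X n) - \<xi>) - 0) < r"
    proof (intro exI allI impI)
      fix n assume n: "N \<le> n"
      have "1 / (real n + 1) \<le> 1 / (real N + 1)" using n by (simp add: frac_le)
      then have "hnorm ip (X n - \<xi>) < d" using Xc[of n] N hnorm_commute[of "X n" \<xi>] by linarith
      then have "hnorm ip (\<mu> (X n) - \<xi>) < r" using d(2) fix\<xi> by metis
      then show "norm (hnorm ip (\<mu> (X n) - \<xi>) - 0) < r" using hnorm_nonneg by simp
    qed
  qed
  moreover have "\<And>n. \<mu> (X n) \<in> A0_plus A0 mult invol" using img X by blast
  ultimately show ?thesis unfolding H_plus_def mem_Collect_eq
    by (intro exI[of _ "\<lambda>n. \<mu> (X n)"]) auto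
qed

theorem mainTheorem17:
  fixes A0 :: "'h::ab_group_add set"
    and sc :: "complex \<Rightarrow> 'h \<Rightarrow> 'h"
    and ip :: "'h \<Rightarrow> 'h \<Rightarrow> complex"
    and mult :: "'h \<Rightarrow> 'h \<Rightarrow> 'h"
    and invol :: "'h \<Rightarrow> 'h"
    and \<mu> :: "'h \<Rightarrow> 'h"
  assumes "hilbert_quasi_star_algebra A0 sc ip mult invol"
    and "module_function A0 ip mult \<mu>"
    and "norm_continuous ip \<mu>"
    and "\<mu> ` A0 \<subseteq> A0_plus A0 mult invol"
  shows "H_plus A0 ip mult invol = H_plus_w A0 ip mult"
proof -
  interpret h: hilbert_quasi_star_algebra A0 sc ip mult invol by fact
  show ?thesis
    using h.Hplus_sub h.Hw_sub[OF assms(2-4)] by blast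
qed

end
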